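(* Let $S$ be a countable set (with its power set as $\sigma$-field) on which $G$ acts measurably. Then $G$ acts properly on $S$ if and only if $0<\lambda(G_{s,s})<\infty$ for all $s\in S$. In this case $$\Delta^*(s)=\frac{\lambda(G_{s,s})}{\lambda(G_{\beta(s),\beta(s)})}=\frac{|G_{s,s}\beta(s)|}{|G_{\beta(s),\beta(s)}s|},\qquad s\in S,$$ and either all orbits are infinite or all orbits are finite.
   Context: $G$ is a locally compact second countable Hausdorff group with left Haar measure $\lambda$ and modular function $\Delta$ ($\int f(gh)\lambda(dg)=\Delta(h^{-1})\int f\,d\lambda$). $G_{s,t}=\{g:gs=t\}$. Proper action: with $\mu_s$ the image of $\lambda$ under $g\mapsto gs$, there is a partition $B_1,B_2,\dots$ of $S$ with $\mu_s(B_n)<\infty$ for all $s,n$. $O$ is a system of representatives of the orbits, $\beta(s)\in O$ the representative of $Gs$, and $\Delta^*(s):=\Delta(g^{-1})$ for any $g$ with $g\beta(s)=s$ (well defined under properness). $|A|$ is cardinality and $G_{s,s}t=\{gt:g\in G_{s,s}\}$. *)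

theory Defs
  imports "HOL-Analysis.Analysis"
begin

text \<open>A locally compact second countable Hausdorff group: the group structure
(gmul, ginv, e) lives on the whole type 'g, whose topology is the type-class topology.\<close>
definition lcsc_group :: "('g::{t2_space,second_countable_topology} \<Rightarrow> 'g \<Rightarrow> 'g) \<Rightarrow> ('g \<Rightarrow> 'g) \<Rightarrow> 'g \<Rightarrow> bool" where
  "lcsc_group gmul ginv e \<longleftrightarrow>
     (\<forall>x y z. gmul (gmul x y) z = gmul x (gmul y z)) \<and>
     (\<forall>x. gmul e x = x \<and> gmul x e = x) \<and>
     (\<forall>x. gmul (ginv x) x = e \<and> gmul x (ginv x) = e) \<and>
     continuous_on UNIV (\<lambda>(x, y). gmul x y) \<and>
     continuous_on UNIV ginv \<and>
     locally_compact_space (euclidean :: 'g topology)"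

definition left_haar :: "('g::topological_space \<Rightarrow> 'g \<Rightarrow> 'g) \<Rightarrow> 'g measure \<Rightarrow> bool" where
  "left_haar gmul lam \<longleftrightarrow>
     sets lam = sets borel \<and>
     (\<forall>g A. A \<in> sets borel \<longrightarrow> emeasure lam ((\<lambda>x. gmul g x) ` A) = emeasure lam A) \<and>
     (\<forall>K. compact K \<longrightarrow> emeasure lam K < \<infinity>) \<and>
     (\<forall>U. open U \<and> U \<noteq> {} \<longrightarrow> 0 < emeasure lam U)"

definition modular_fun :: "('g::topological_space \<Rightarrow> 'g \<Rightarrow> 'g) \<Rightarrow> ('g \<Rightarrow> 'g) \<Rightarrow> 'g measure \<Rightarrow> ('g \<Rightarrow> real) \<Rightarrow> bool" where
  "modular_fun gmul ginv lam Delta \<longleftrightarrow>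
     (\<forall>h. 0 < Delta h) \<and>
     (\<forall>h. \<forall>f \<in> borel_measurable borel.
        (\<integral>\<^sup>+ g. f (gmul g h) \<partial>lam) = ennreal (Delta (ginv h)) * (\<integral>\<^sup>+ g. f g \<partial>lam))"

definition measurable_action ::
  "('g::topological_space \<Rightarrow> 'g \<Rightarrow> 'g) \<Rightarrow> 'g \<Rightarrow> ('g \<Rightarrow> 's \<Rightarrow> 's) \<Rightarrow> 's set \<Rightarrow> bool" where
  "measurable_action gmul e act S \<longleftrightarrow>
     (\<forall>g. \<forall>s\<in>S. act g s \<in> S) \<and>
     (\<forall>s\<in>S. act e s = s) \<and>
     (\<forall>g h. \<forall>s\<in>S. act (gmul g h) s = act g (act h s)) \<and>
     (\<lambda>(g, s). act g s) \<in> measurable (borel \<Otimes>\<^sub>M count_space S) (count_space S)"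

definition Gst :: "('g \<Rightarrow> 's \<Rightarrow> 's) \<Rightarrow> 's \<Rightarrow> 's \<Rightarrow> 'g set" where
  "Gst act s t = {g. act g s = t}"

definition orbit :: "('g \<Rightarrow> 's \<Rightarrow> 's) \<Rightarrow> 's \<Rightarrow> 's set" where
  "orbit act s = range (\<lambda>g. act g s)"

definition orbit_measure :: "'g measure \<Rightarrow> ('g \<Rightarrow> 's \<Rightarrow> 's) \<Rightarrow> 's set \<Rightarrow> 's \<Rightarrow> 's measure" where
  "orbit_measure lam act S s = distr lam (count_space S) (\<lambda>g. act g s)"

definition proper_action :: "'g measure \<Rightarrow> ('g \<Rightarrow> 's \<Rightarrow> 's) \<Rightarrow> 's set \<Rightarrow> bool" where
  "proper_action lam act S \<longleftrightarrow>
     (\<exists>B :: nat \<Rightarrow> 's set.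
        disjoint_family B \<and> (\<Union>n. B n) = S \<and>
        (\<forall>s\<in>S. \<forall>n. emeasure (orbit_measure lam act S s) (B n) < \<infinity>))"

definition orbit_rep :: "('g \<Rightarrow> 's \<Rightarrow> 's) \<Rightarrow> 's set \<Rightarrow> ('s \<Rightarrow> 's) \<Rightarrow> bool" where
  "orbit_rep act S beta \<longleftrightarrow>
     (\<forall>s\<in>S. beta s \<in> orbit act s) \<and>
     (\<forall>s\<in>S. \<forall>t\<in>orbit act s. beta t = beta s)"

definition Delta_star :: "('g \<Rightarrow> 'g) \<Rightarrow> ('g \<Rightarrow> real) \<Rightarrow> ('g \<Rightarrow> 's \<Rightarrow> 's) \<Rightarrow> ('s \<Rightarrow> 's) \<Rightarrow> 's \<Rightarrow> real" where
  "Delta_star ginv Delta act beta s = Delta (ginv (SOME g. act g (beta s) = s))"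

end

theory Submission imports Defs begin

locale actset =
  fixes gmul :: "'g::topological_space \<Rightarrow> 'g \<Rightarrow> 'g" and ginv :: "'g \<Rightarrow> 'g" and e :: 'g
    and lam :: "'g measure" and act :: "'g \<Rightarrow> 's \<Rightarrow> 's" and S :: "'s set"
  assumes assoc: "\<And>x y z. gmul (gmul x y) z = gmul x (gmul y z)"
    and idl: "\<And>x. gmul e x = x" and idr: "\<And>x. gmul x e = x"
    and invl: "\<And>x. gmul (ginv x) x = e" and invr: "\<And>x. gmul x (ginv x) = e"
    and haar: "left_haar gmul lam"
    and cS: "countable S"
    and ma: "measurable_action gmul e act S"
begin

lemma sets_lam: "sets lam = sets borel" using haar unfolding left_haar_def by auto

lemma act_S: "s \<in> S \<Longrightarrow> act g s \<in> S" using ma unfolding measurable_action_def by auto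
lemma act_e: "s \<in> S \<Longrightarrow> act e s = s" using ma unfolding measurable_action_def by auto
lemma act_mul: "s \<in> S \<Longrightarrow> act (gmul g h) s = act g (act h s)" using ma unfolding measurable_action_def by auto

lemma act_inv: assumes "s \<in> S" "act g s = t" shows "act (ginv g) t = s"
proof -
  have "act (ginv g) (act g s) = act (gmul (ginv g) g) s" using act_mul[OF assms(1)] by simp
  also have "\<dots> = s" by (simp add: invl act_e assms(1))
  finally show ?thesis using assms(2) by simp
qed

lemma meas_orb: assumes "s \<in> S" shows "(\<lambda>g. act g s) \<in> measurable borel (count_space S)"
proof -
  have m: "(\<lambda>(g, s). act g s) \<in> measurable (borel \<Otimes>\<^sub>M count_space S) (count_space S)"
    using ma unfolding measurable_action_def by auto
  have "(\<lambda>g. (g, s)) \<in> measurable borel (borel \<Otimes>\<^sub>M count_space S)"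
    by (rule measurable_Pair) (auto simp: assms)
  from measurable_comp[OF this m] show ?thesis by (simp add: o_def)
qed

lemma meas_orb_lam: "s \<in> S \<Longrightarrow> (\<lambda>g. act g s) \<in> measurable lam (count_space S)"
  using meas_orb measurable_cong_sets[OF sets_lam refl] by blast

lemma Gst_borel: assumes "s \<in> S" shows "Gst act s t \<in> sets borel"
proof (cases "t \<in> S")
  case True
  have "(\<lambda>g. act g s) -` {t} \<inter> space borel \<in> sets borel"
    using measurable_sets[OF meas_orb[OF assms]] True by auto
  then show ?thesis unfolding Gst_def by (simp add: vimage_def)
next
  case False
  then have "Gst act s t = {}" using act_S[OF assms] unfolding Gst_def by auto
  then show ?thesis by simp
qed

lemma Gst_lam: "s \<in> S \<Longrightarrow> Gst act s t \<in> sets lam" using Gst_borel sets_lam by auto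

lemma coset:
  assumes b: "b \<in> S" and cl: "\<And>x y. x \<in> H \<Longrightarrow> y \<in> H \<Longrightarrow> gmul x y \<in> H"
    and ci: "\<And>x. x \<in> H \<Longrightarrow> ginv x \<in> H" and g: "g \<in> H"
  shows "{k\<in>H. act k b = act g b} = gmul g ` {k\<in>H. act k b = b}"
proof
  show "{k\<in>H. act k b = act g b} \<subseteq> gmul g ` {k\<in>H. act k b = b}"
  proof
    fix k assume k: "k \<in> {k\<in>H. act k b = act g b}"
    have "k = gmul g (gmul (ginv g) k)" by (simp add: assoc[symmetric] invr idl)
    moreover have "gmul (ginv g) k \<in> H" using k g cl ci by auto
    moreover have "act (gmul (ginv g) k) b = b" using k act_mul[OF b] act_inv[OF b] by auto
    ultimately show "k \<in> gmul g ` {k\<in>H. act k b = b}" by blast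
  qed
next
  show "gmul g ` {k\<in>H. act k b = b} \<subseteq> {k\<in>H. act k b = act g b}"
    using cl g act_mul[OF b] by auto
qed

lemma decomp:
  assumes H: "H \<in> sets borel" and b: "b \<in> S"
    and cos: "\<And>g. g \<in> H \<Longrightarrow> {k\<in>H. act k b = act g b} = gmul g ` {k\<in>H. act k b = b}"
  shows "emeasure lam H = emeasure lam {k\<in>H. act k b = b}
           * emeasure (count_space ((\<lambda>g. act g b) ` H)) ((\<lambda>g. act g b) ` H)"
proof -
  define I where "I = (\<lambda>g. act g b) ` H"
  define X where "X u = H \<inter> Gst act b u" for u
  define K where "K = {k\<in>H. act k b = b}"
  have IS: "I \<subseteq> S" unfolding I_def using act_S[OF b] by auto
  have cI: "countable I" using countable_subset[OF IS cS] .
  have HU: "H = (\<Union>u\<in>I. X u)" unfolding I_def X_def Gst_def by auto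
  have Xs: "X u \<in> sets lam" for u unfolding X_def using H Gst_borel[OF b] sets_lam by auto
  have dj: "disjoint_family_on X I" unfolding disjoint_family_on_def X_def Gst_def by auto
  have "K = H \<inter> Gst act b b" unfolding K_def Gst_def by auto
  then have Kb: "K \<in> sets borel" using Gst_borel[OF b, of b] H by simp
  have XK: "emeasure lam (X u) = emeasure lam K" if uI: "u \<in> I" for u
  proof -
    obtain g where g: "g \<in> H" "u = act g b" using uI by (auto simp: I_def)
    have "X u = gmul g ` K" unfolding X_def K_def Gst_def using cos[OF g(1)] g(2) by auto
    then show ?thesis using haar Kb unfolding left_haar_def by auto
  qed
  have "emeasure lam H = (\<integral>\<^sup>+ u. emeasure lam (X u) \<partial>count_space I)"
    using emeasure_UN_countable[of I X lam] cI Xs dj HU by auto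
  also have "\<dots> = (\<integral>\<^sup>+ u. emeasure lam K \<partial>count_space I)"
    by (rule nn_integral_cong) (simp add: XK)
  also have "\<dots> = emeasure lam K * emeasure (count_space I) I" by simp
  finally show ?thesis unfolding K_def I_def .
qed


lemma space_lam: "space lam = UNIV" using sets_eq_imp_space_eq[OF sets_lam] by simp

lemma ecount: "emeasure (count_space A) A = (if finite A then of_nat (card A) else \<infinity>)"
  by (simp add: emeasure_count_space)

lemma Gst_trans: assumes s: "s \<in> S" and g: "act g s = t"
  shows "emeasure lam (Gst act s t) = emeasure lam (Gst act s s)"
proof -
  have "{k\<in>UNIV. act k s = act g s} = gmul g ` {k\<in>UNIV. act k s = s}"
    by (rule coset[OF s]) auto
  then have "Gst act s t = gmul g ` Gst act s s" using g unfolding Gst_def by simp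
  then show ?thesis using haar Gst_borel[OF s] unfolding left_haar_def by auto
qed

lemma lam_UNIV_pos: "0 < emeasure lam UNIV"
  using haar unfolding left_haar_def by auto

lemma univ_decomp: assumes s: "s \<in> S"
  shows "emeasure lam UNIV = emeasure lam (Gst act s s) * emeasure (count_space (orbit act s)) (orbit act s)"
proof -
  have "emeasure lam UNIV = emeasure lam {k\<in>UNIV. act k s = s}
           * emeasure (count_space ((\<lambda>g. act g s) ` UNIV)) ((\<lambda>g. act g s) ` UNIV)"
    by (rule decomp[OF _ s], simp, rule coset[OF s], auto)
  then show ?thesis unfolding Gst_def orbit_def by simp
qed

lemma stab_pos: assumes s: "s \<in> S" shows "0 < emeasure lam (Gst act s s)"
  using univ_decomp[OF s] lam_UNIV_pos by (auto simp: zero_less_iff_neq_zero)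

lemma stab_decomp: assumes a: "a \<in> S" and b: "b \<in> S"
  shows "emeasure lam (Gst act a a) = emeasure lam (Gst act a a \<inter> Gst act b b)
     * emeasure (count_space ((\<lambda>g. act g b) ` Gst act a a)) ((\<lambda>g. act g b) ` Gst act a a)"
proof -
  have cl: "gmul x y \<in> Gst act a a" if "x \<in> Gst act a a" "y \<in> Gst act a a" for x y
    using that act_mul[OF a] unfolding Gst_def by auto
  have ci: "ginv x \<in> Gst act a a" if "x \<in> Gst act a a" for x
    using that act_inv[OF a, of x a] unfolding Gst_def by auto
  have "emeasure lam (Gst act a a) = emeasure lam {k\<in>Gst act a a. act k b = b}
     * emeasure (count_space ((\<lambda>g. act g b) ` Gst act a a)) ((\<lambda>g. act g b) ` Gst act a a)"
    by (rule decomp[OF Gst_borel[OF a] b]) (rule coset[OF b cl ci], auto)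
  moreover have "{k\<in>Gst act a a. act k b = b} = Gst act a a \<inter> Gst act b b" unfolding Gst_def by auto
  ultimately show ?thesis by simp
qed


lemma proper_iff:
  "proper_action lam act S \<longleftrightarrow>
     (\<forall>s\<in>S. 0 < emeasure lam (Gst act s s) \<and> emeasure lam (Gst act s s) < \<infinity>)"
proof
  assume "proper_action lam act S"
  then obtain B :: "nat \<Rightarrow> 's set" where dj: "disjoint_family B" and U: "(\<Union>n. B n) = S"
    and fin: "\<forall>s\<in>S. \<forall>n. emeasure (orbit_measure lam act S s) (B n) < \<infinity>"
    unfolding proper_action_def by blast
  show "\<forall>s\<in>S. 0 < emeasure lam (Gst act s s) \<and> emeasure lam (Gst act s s) < \<infinity>"
  proof
    fix s assume s: "s \<in> S"
    then obtain n where n: "s \<in> B n" using U by auto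
    have BS: "B n \<in> sets (count_space S)" using U by auto
    have "emeasure (orbit_measure lam act S s) (B n) = emeasure lam ((\<lambda>g. act g s) -` B n \<inter> space lam)"
      unfolding orbit_measure_def using emeasure_distr[OF meas_orb_lam[OF s] BS] .
    moreover have incl: "Gst act s s \<subseteq> (\<lambda>g. act g s) -` B n \<inter> space lam"
      using n space_lam unfolding Gst_def by auto
    moreover have meas: "(\<lambda>g. act g s) -` B n \<inter> space lam \<in> sets lam"
      using measurable_sets[OF meas_orb_lam[OF s] BS] .
    ultimately have "emeasure lam (Gst act s s) \<le> emeasure (orbit_measure lam act S s) (B n)"
      using emeasure_mono[OF incl meas] by simp
    then show "0 < emeasure lam (Gst act s s) \<and> emeasure lam (Gst act s s) < \<infinity>"
      using fin s stab_pos[OF s] by (meson le_less_trans)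
  qed
next
  assume H: "\<forall>s\<in>S. 0 < emeasure lam (Gst act s s) \<and> emeasure lam (Gst act s s) < \<infinity>"
  define B where "B n = {t\<in>S. to_nat_on S t = n}" for n
  have dj: "disjoint_family B" unfolding disjoint_family_on_def B_def by auto
  have U: "(\<Union>n. B n) = S" unfolding B_def by auto
  have fin: "emeasure (orbit_measure lam act S s) (B n) < \<infinity>" if s: "s \<in> S" for s n
  proof (cases "B n = {}")
    case True then show ?thesis by simp
  next
    case False
    then obtain t where t: "t \<in> B n" by auto
    have Bt: "B n = {t}" using t to_nat_on_inj[OF cS] unfolding B_def by auto
    have tS: "t \<in> S" using t unfolding B_def by auto
    have "emeasure (orbit_measure lam act S s) (B n) = emeasure lam ((\<lambda>g. act g s) -` {t} \<inter> space lam)"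
      unfolding orbit_measure_def Bt using emeasure_distr[OF meas_orb_lam[OF s], of "{t}"] tS by auto
    also have "\<dots> = emeasure lam (Gst act s t)" unfolding Gst_def space_lam by (simp add: vimage_def)
    also have "\<dots> < \<infinity>"
    proof (cases "\<exists>g. act g s = t")
      case True
      then obtain g where "act g s = t" by auto
      then show ?thesis using Gst_trans[OF s] H s by auto
    next
      case False
      then have "Gst act s t = {}" unfolding Gst_def by auto
      then show ?thesis by simp
    qed
    finally show ?thesis .
  qed
  show "proper_action lam act S" unfolding proper_action_def using dj U fin by blast
qed

lemma orbits_dich:
  assumes H: "\<forall>s\<in>S. 0 < emeasure lam (Gst act s s) \<and> emeasure lam (Gst act s s) < \<infinity>"
  shows "(\<forall>s\<in>S. infinite (orbit act s)) \<or> (\<forall>s\<in>S. finite (orbit act s))"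
proof (cases "emeasure lam UNIV = \<infinity>")
  case True
  have "infinite (orbit act s)" if s: "s \<in> S" for s
  proof
    assume f: "finite (orbit act s)"
    have "emeasure lam UNIV = emeasure lam (Gst act s s) * of_nat (card (orbit act s))"
      using univ_decomp[OF s] f by (simp add: ecount)
    moreover have "emeasure lam (Gst act s s) * of_nat (card (orbit act s)) < \<infinity>"
      using H s by (simp add: ennreal_mult_less_top of_nat_less_top)
    ultimately show False using True by simp
  qed
  then show ?thesis by blast
next
  case False
  have "finite (orbit act s)" if s: "s \<in> S" for s
  proof (rule ccontr)
    assume f: "infinite (orbit act s)"
    have "emeasure lam UNIV = emeasure lam (Gst act s s) * \<infinity>"
      using univ_decomp[OF s] f by (simp add: ecount)
    also have "\<dots> = \<infinity>"
    proof -
      have p: "emeasure lam (Gst act s s) \<noteq> 0" using H s by (metis less_irrefl)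
      then show ?thesis by (simp add: ennreal_mult_eq_top_iff)
    qed
    finally show False using False by simp
  qed
  then show ?thesis by blast
qed


lemma card_ratio:
  assumes H: "\<forall>s\<in>S. 0 < emeasure lam (Gst act s s) \<and> emeasure lam (Gst act s s) < \<infinity>"
    and a: "a \<in> S" and b: "b \<in> S"
  shows "measure lam (Gst act a a) / measure lam (Gst act b b)
     = real (card ((\<lambda>g. act g b) ` Gst act a a)) / real (card ((\<lambda>g. act g a) ` Gst act b b))"
proof -
  define K where "K = Gst act a a \<inter> Gst act b b"
  define I1 where "I1 = (\<lambda>g. act g b) ` Gst act a a"
  define I2 where "I2 = (\<lambda>g. act g a) ` Gst act b b"
  have d1: "emeasure lam (Gst act a a) = emeasure lam K * emeasure (count_space I1) I1"
    using stab_decomp[OF a b] unfolding K_def I1_def .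
  have d2: "emeasure lam (Gst act b b) = emeasure lam K * emeasure (count_space I2) I2"
    using stab_decomp[OF b a] unfolding K_def I2_def by (simp add: Int_commute)
  have Kfin: "emeasure lam K < \<infinity>"
    using H a emeasure_mono[of K "Gst act a a" lam] Gst_lam[OF a] unfolding K_def
    by (meson Int_lower1 le_less_trans)
  have Kpos: "emeasure lam K \<noteq> 0" using d1 H a by (metis mult_zero_left less_irrefl)
  have key: "finite I \<and> card I > 0 \<and> emeasure lam X = emeasure lam K * of_nat (card I)"
    if d: "emeasure lam X = emeasure lam K * emeasure (count_space I) I"
       and X: "0 < emeasure lam X" "emeasure lam X < \<infinity>" for X I
  proof -
    have fI: "finite I"
    proof (rule ccontr)
      assume "infinite I"
      then have "emeasure lam X = emeasure lam K * \<infinity>" using d by (simp add: ecount)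
      also have "\<dots> = \<infinity>" using Kpos by (simp add: ennreal_mult_eq_top_iff)
      finally show False using X by simp
    qed
    then have e: "emeasure lam X = emeasure lam K * of_nat (card I)" using d by (simp add: ecount)
    have "card I \<noteq> 0" using e X by (metis mult_zero_right of_nat_0 less_irrefl)
    then show ?thesis using fI e by (simp add: card_gt_0_iff)
  qed
  have k1: "finite I1 \<and> card I1 > 0 \<and> emeasure lam (Gst act a a) = emeasure lam K * of_nat (card I1)"
    by (rule key[OF d1]) (use H a in auto)
  have k2: "finite I2 \<and> card I2 > 0 \<and> emeasure lam (Gst act b b) = emeasure lam K * of_nat (card I2)"
    by (rule key[OF d2]) (use H b in auto)
  define k where "k = enn2real (emeasure lam K)"
  have kpos: "k > 0" unfolding k_def using Kpos Kfin
    by (simp add: enn2real_positive_iff zero_less_iff_neq_zero)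
  have m1: "measure lam (Gst act a a) = k * real (card I1)"
    unfolding measure_def k_def using k1 by (simp add: enn2real_mult)
  have m2: "measure lam (Gst act b b) = k * real (card I2)"
    unfolding measure_def k_def using k2 by (simp add: enn2real_mult)
  show ?thesis unfolding I1_def[symmetric] I2_def[symmetric] m1 m2 using kpos by simp
qed

lemma delta_part:
  fixes Delta :: "'g \<Rightarrow> real"
  assumes modf: "modular_fun gmul ginv lam Delta" and orep: "orbit_rep act S beta"
    and H: "\<forall>s\<in>S. 0 < emeasure lam (Gst act s s) \<and> emeasure lam (Gst act s s) < \<infinity>"
    and s: "s \<in> S"
  shows "Delta_star ginv Delta act beta s
           = measure lam (Gst act s s) / measure lam (Gst act (beta s) (beta s))"
proof -
  define b where "b = beta s"
  obtain g0 where g0: "b = act g0 s" using orep s unfolding orbit_rep_def orbit_def b_def by auto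
  have bS: "b \<in> S" using g0 act_S[OF s] by simp
  have ex: "\<exists>g. act g b = s" using act_inv[OF s g0[symmetric]] by blast
  define g where "g = (SOME g. act g b = s)"
  have g: "act g b = s" unfolding g_def using someI_ex[OF ex] .
  have DS: "Delta_star ginv Delta act beta s = Delta (ginv g)"
    unfolding Delta_star_def g_def b_def by simp
  define A where "A = Gst act b s"
  have Ab: "A \<in> sets borel" unfolding A_def using Gst_borel[OF bS] .
  have fm: "(indicator A :: 'g \<Rightarrow> ennreal) \<in> borel_measurable borel" using Ab by simp
  have mf: "(\<integral>\<^sup>+ x. indicator A (gmul x g) \<partial>lam) = ennreal (Delta (ginv g)) * (\<integral>\<^sup>+ x. indicator A x \<partial>lam)"
    using modf fm unfolding modular_fun_def by blast
  have "indicator A (gmul x g) = (indicator (Gst act s s) x :: ennreal)" for x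
    unfolding A_def Gst_def using act_mul[OF bS, of x g] g by (simp add: indicator_def)
  then have "emeasure lam (Gst act s s) = ennreal (Delta (ginv g)) * emeasure lam A"
    using mf Gst_lam[OF s] Ab sets_lam by simp
  also have "emeasure lam A = emeasure lam (Gst act b b)"
    unfolding A_def using Gst_trans[OF bS g] .
  finally have e: "emeasure lam (Gst act s s) = ennreal (Delta (ginv g)) * emeasure lam (Gst act b b)" .
  have Dp: "Delta (ginv g) > 0" using modf unfolding modular_fun_def by blast
  have "measure lam (Gst act s s) = Delta (ginv g) * measure lam (Gst act b b)"
    unfolding measure_def e using Dp by (simp add: enn2real_mult)
  moreover have "measure lam (Gst act b b) > 0" unfolding measure_def using H bS
    by (simp add: enn2real_positive_iff)
  ultimately show ?thesis unfolding DS b_def[symmetric] by simp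
qed

end

theorem lemma2p7:
  fixes gmul :: "'g::{t2_space,second_countable_topology} \<Rightarrow> 'g \<Rightarrow> 'g"
    and ginv :: "'g \<Rightarrow> 'g" and e :: 'g
    and lam :: "'g measure" and Delta :: "'g \<Rightarrow> real"
    and act :: "'g \<Rightarrow> 's \<Rightarrow> 's" and S :: "'s set" and beta :: "'s \<Rightarrow> 's"
  assumes "lcsc_group gmul ginv e"
    and "left_haar gmul lam"
    and "modular_fun gmul ginv lam Delta"
    and "countable S"
    and "measurable_action gmul e act S"
    and "orbit_rep act S beta"
  shows "(proper_action lam act S \<longleftrightarrow>
            (\<forall>s\<in>S. 0 < emeasure lam (Gst act s s) \<and> emeasure lam (Gst act s s) < \<infinity>))
       \<and> (proper_action lam act S \<longrightarrow>
            (\<forall>s\<in>S.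
               Delta_star ginv Delta act beta s
                 = measure lam (Gst act s s) / measure lam (Gst act (beta s) (beta s))
             \<and> Delta_star ginv Delta act beta s
                 = real (card ((\<lambda>g. act g (beta s)) ` Gst act s s))
                   / real (card ((\<lambda>g. act g s) ` Gst act (beta s) (beta s))))
          \<and> ((\<forall>s\<in>S. infinite (orbit act s)) \<or> (\<forall>s\<in>S. finite (orbit act s))))"
proof -
  interpret actset gmul ginv e lam act S
    using assms(1,2,4,5) unfolding lcsc_group_def by unfold_locales auto
  have P: "proper_action lam act S \<longleftrightarrow>
            (\<forall>s\<in>S. 0 < emeasure lam (Gst act s s) \<and> emeasure lam (Gst act s s) < \<infinity>)"
    by (rule proper_iff)
  have Q: "(\<forall>s\<in>S.
               Delta_star ginv Delta act beta s
                 = measure lam (Gst act s s) / measure lam (Gst act (beta s) (beta s))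
             \<and> Delta_star ginv Delta act beta s
                 = real (card ((\<lambda>g. act g (beta s)) ` Gst act s s))
                   / real (card ((\<lambda>g. act g s) ` Gst act (beta s) (beta s))))
          \<and> ((\<forall>s\<in>S. infinite (orbit act s)) \<or> (\<forall>s\<in>S. finite (orbit act s)))"
    if H: "\<forall>s\<in>S. 0 < emeasure lam (Gst act s s) \<and> emeasure lam (Gst act s s) < \<infinity>"
  proof (intro conjI ballI)
    fix s assume s: "s \<in> S"
    have bS: "beta s \<in> S" using assms(6) s act_S[OF s] unfolding orbit_rep_def orbit_def by auto
    show D: "Delta_star ginv Delta act beta s
                 = measure lam (Gst act s s) / measure lam (Gst act (beta s) (beta s))"
      by (rule delta_part[OF assms(3,6) H s])
    show "Delta_star ginv Delta act beta s
                 = real (card ((\<lambda>g. act g (beta s)) ` Gst act s s))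
                   / real (card ((\<lambda>g. act g s) ` Gst act (beta s) (beta s)))"
      unfolding D by (rule card_ratio[OF H s bS])
  next
    show "(\<forall>s\<in>S. infinite (orbit act s)) \<or> (\<forall>s\<in>S. finite (orbit act s))"
      by (rule orbits_dich[OF H])
  qed
  show ?thesis using P Q by blast
qed

end
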